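(* Let $\Pi$ be a non-negative projector on $\mathcal{Q}^n$ of rank $q$. Then there exist non-negative states $|\psi_1\rangle,\ldots,|\psi_q\rangle$ such that $\langle\psi_a|\psi_b\rangle=\delta_{a,b}$ for all $a,b$ and $\Pi=\sum_{a=1}^q|\psi_a\rangle\langle\psi_a|$.
   Context: $\mathcal{Q}^n=(\mathbb{C}^2)^{\otimes n}$ with standard basis $\{|x\rangle\}$, $x\in\{0,1\}^n$. A non-negative projector is a Hermitian projector on $\mathcal{Q}^n$ whose matrix in the standard basis has only real non-negative entries. A non-negative state is a normalized vector in $\mathcal{Q}^n$ all of whose amplitudes in the standard basis are real and non-negative. *)

theory Defs
  imports Complex_Main "Jordan_Normal_Form.DL_Rank" "Jordan_Normal_Form.Schur_Decomposition"
begin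

(* Q^n = (C^2)^{\<otimes> n} is represented as complex vectors of dimension 2^n; the standard
   basis vector |x>, x \<in> {0,1}^n, is the unit vector with index (binary value of x) < 2^n. *)

definition nonneg_entry :: "complex \<Rightarrow> bool" where
  "nonneg_entry z \<longleftrightarrow> z \<in> \<real> \<and> Re z \<ge> 0"

definition nonneg_projector :: "nat \<Rightarrow> complex mat \<Rightarrow> bool" where
  "nonneg_projector n P \<longleftrightarrow> P \<in> carrier_mat (2^n) (2^n) \<and> mat_adjoint P = P \<and> P * P = P
     \<and> (\<forall>i<2^n. \<forall>j<2^n. nonneg_entry (P $$ (i,j)))"

definition braket :: "complex vec \<Rightarrow> complex vec \<Rightarrow> complex" where
  "braket v w = (\<Sum>i<dim_vec v. cnj (v $ i) * w $ i)"

definition nonneg_state :: "nat \<Rightarrow> complex vec \<Rightarrow> bool" where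
  "nonneg_state n v \<longleftrightarrow> v \<in> carrier_vec (2^n) \<and> braket v v = 1
     \<and> (\<forall>i<2^n. nonneg_entry (v $ i))"

definition ketbra :: "complex vec \<Rightarrow> complex mat" where
  "ketbra v = mat (dim_vec v) (dim_vec v) (\<lambda>(i,j). v $ i * cnj (v $ j))"

(* \<Sum>_{a<q} |\<psi>_a><\<psi>_a| as a 2^n \<times> 2^n matrix (matrices do not form a comm_monoid_add
   type in Jordan_Normal_Form, so the sum is written entrywise) *)
definition sum_ketbra :: "nat \<Rightarrow> nat \<Rightarrow> (nat \<Rightarrow> complex vec) \<Rightarrow> complex mat" where
  "sum_ketbra n q \<psi> = mat (2^n) (2^n) (\<lambda>(i,j). \<Sum>a<q. ketbra (\<psi> a) $$ (i,j))"

end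

theory Submission imports Defs begin

locale nnproj =
  fixes p :: "nat \<Rightarrow> nat \<Rightarrow> real" and N :: nat
  assumes nn: "p i j \<ge> 0" and sym: "p i j = p j i"
    and idem: "p i j = (\<Sum>k<N. p i k * p k j)"
    and out: "N \<le> i \<Longrightarrow> p i j = 0"
begin

lemma outj: "N \<le> j \<Longrightarrow> p i j = 0"
  using out sym by metis

lemma pos_lt: "0 < p i j \<Longrightarrow> i < N \<and> j < N"
  using out outj by (metis less_irrefl not_le)

lemma sq_le: "(p i j)^2 \<le> p i i"
proof (cases "j < N")
  case True
  have "p i i = (\<Sum>k<N. p i k * p k i)" by (rule idem)
  also have "\<dots> = (\<Sum>k<N. (p i k)^2)"
    by (rule sum.cong) (auto simp: power2_eq_square intro: arg_cong[where f="\<lambda>x. p i _ * x"] sym)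
  also have "\<dots> \<ge> (p i j)^2" using True by (intro member_le_sum) auto
  finally show ?thesis .
next
  case False
  then show ?thesis using outj[of j i] nn[of i i] by simp
qed

lemma trans_pos: assumes "0 < p i j" "0 < p j k" shows "0 < p i k"
proof -
  have j: "j < N" using pos_lt assms(1) by blast
  have "p i j * p j k \<le> (\<Sum>l<N. p i l * p l k)"
    using j by (intro member_le_sum) (auto intro: mult_nonneg_nonneg nn)
  then show ?thesis using idem[of i k] assms by (metis mult_pos_pos order_less_le_trans)
qed

lemma key:
  assumes rj: "0 < p r j"
  shows "p j i * p r r = p r i * p j r"
proof -
  have rN: "r < N" and jN: "j < N" using pos_lt rj by auto
  define w where "w k = p r r * p k i - p r i * p k r" for k
  have Pw: "(\<Sum>l<N. p k l * w l) = w k" for k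
  proof -
    have "(\<Sum>l<N. p k l * w l) = p r r * (\<Sum>l<N. p k l * p l i) - p r i * (\<Sum>l<N. p k l * p l r)"
      unfolding w_def by (simp add: sum_distrib_left sum_subtractf algebra_simps)
    also have "\<dots> = w k" unfolding w_def using idem[of k i] idem[of k r] by simp
    finally show ?thesis .
  qed
  define y where "y l = \<bar>w l\<bar>" for l
  define z where "z k = (\<Sum>l<N. p k l * y l)" for k
  have y0: "0 \<le> y l" for l unfolding y_def by simp
  have ge: "y k \<le> z k" for k
  proof -
    have "y k = \<bar>\<Sum>l<N. p k l * w l\<bar>" using Pw y_def by simp
    also have "\<dots> \<le> (\<Sum>l<N. \<bar>p k l * w l\<bar>)" by (rule sum_abs)
    also have "\<dots> = z k" unfolding z_def y_def using nn by (simp add: abs_mult)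
    finally show ?thesis .
  qed
  have eq: "(\<Sum>k<N. y k * z k) = (\<Sum>k<N. z k * z k)"
  proof -
    have zz: "z k * z k = (\<Sum>l<N. \<Sum>m<N. y l * y m * (p l k * p k m))" for k
    proof -
      have "z k * z k = (\<Sum>l<N. \<Sum>m<N. (p k l * y l) * (p k m * y m))"
        unfolding z_def by (rule sum_product)
      also have "\<dots> = (\<Sum>l<N. \<Sum>m<N. y l * y m * (p l k * p k m))"
      proof (intro sum.cong refl)
        fix l m show "(p k l * y l) * (p k m * y m) = y l * y m * (p l k * p k m)"
          using sym[of k l] by simp
      qed
      finally show ?thesis .
    qed
    have "(\<Sum>k<N. z k * z k) = (\<Sum>k<N. \<Sum>l<N. \<Sum>m<N. y l * y m * (p l k * p k m))"
      using zz by simp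
    also have "\<dots> = (\<Sum>l<N. \<Sum>m<N. \<Sum>k<N. y l * y m * (p l k * p k m))"
      by (rule trans[OF sum.swap], rule sum.cong[OF refl], rule sum.swap)
    also have "\<dots> = (\<Sum>l<N. \<Sum>m<N. y l * y m * p l m)"
      by (simp add: sum_distrib_left[symmetric] idem[symmetric])
    also have "\<dots> = (\<Sum>k<N. y k * z k)"
      unfolding z_def by (simp add: sum_distrib_left algebra_simps)
    finally show ?thesis by simp
  qed
  have "(\<Sum>k<N. z k * (z k - y k)) = 0" using eq by (simp add: algebra_simps sum_subtractf)
  moreover have "\<forall>k\<in>{..<N}. 0 \<le> z k * (z k - y k)"
  proof
    fix k
    have a: "0 \<le> z k" using y0[of k] ge[of k] by linarith
    show "0 \<le> z k * (z k - y k)" using a ge[of k] by (intro mult_nonneg_nonneg) auto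
  qed
  ultimately have "\<forall>k\<in>{..<N}. z k * (z k - y k) = 0"
    using sum_nonneg_eq_0_iff[OF finite_lessThan, of N "\<lambda>k. z k * (z k - y k)"] by simp
  then have "z r * (z r - y r) = 0" using rN by auto
  moreover have "y r = 0" unfolding y_def w_def using sym[of r i] by simp
  ultimately have "z r = 0" by simp
  then have "\<forall>l\<in>{..<N}. p r l * y l = 0"
    unfolding z_def using sum_nonneg_eq_0_iff[OF finite_lessThan, of N "\<lambda>l. p r l * y l"] nn y0
    by (simp add: mult_nonneg_nonneg)
  then have "p r j * y j = 0" using jN by blast
  then have "y j = 0" using rj by simp
  then show ?thesis unfolding y_def w_def using sym[of r j] by (simp add: algebra_simps)
qed


definition rep :: "nat \<Rightarrow> nat" where "rep i = (LEAST j. 0 < p i j)"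
definition RR :: "nat set" where "RR = {r. 0 < p r r \<and> rep r = r}"

lemma rep_pos: "0 < p i i \<Longrightarrow> 0 < p i (rep i)"
  unfolding rep_def by (rule LeastI)

lemma same_rep: assumes "0 < p i j" shows "rep i = rep j"
proof -
  have "(\<lambda>k. 0 < p i k) = (\<lambda>k. 0 < p j k)"
  proof
    fix k
    have ji: "0 < p j i" using assms sym by simp
    show "(0 < p i k) = (0 < p j k)" using trans_pos[OF ji] trans_pos[OF assms] by blast
  qed
  then show ?thesis unfolding rep_def by simp
qed

lemma RR_sub: "RR \<subseteq> {..<N}" unfolding RR_def using pos_lt by auto
lemma RR_fin: "finite RR" using RR_sub finite_subset by blast

lemma rep_in_RR: assumes "0 < p i i" shows "rep i \<in> RR"
proof -
  have a: "0 < p i (rep i)" using rep_pos assms .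
  have b: "0 < p (rep i) i" using a sym by simp
  have "0 < p (rep i) (rep i)" using trans_pos[OF b a] .
  moreover have "rep (rep i) = rep i" using same_rep[OF a] by simp
  ultimately show ?thesis unfolding RR_def by simp
qed

lemma RR_orth: assumes "r \<in> RR" "s \<in> RR" "r \<noteq> s" shows "p r s = 0"
proof (rule ccontr)
  assume "p r s \<noteq> 0"
  then have "0 < p r s" using nn[of r s] by simp
  then have "rep r = rep s" by (rule same_rep)
  then show False using assms unfolding RR_def by simp
qed

lemma zero_diag: assumes "p i i = 0" shows "p i j = 0"
  using sq_le[of i j] assms by simp

lemma not_pos_zero: assumes "\<not> 0 < p i i" shows "p i j = 0"
  using assms nn[of i i] zero_diag by simp

lemma decomp: "p i j = (\<Sum>r\<in>RR. p i r * p j r / p r r)"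
proof (cases "0 < p i i")
  case True
  define r0 where "r0 = rep i"
  have r0: "r0 \<in> RR" using rep_in_RR True r0_def by simp
  have pir0: "0 < p i r0" using rep_pos True r0_def by simp
  have r0r0: "0 < p r0 r0" using r0 unfolding RR_def by simp
  have others: "p i r = 0" if "r \<in> RR" "r \<noteq> r0" for r
  proof (rule ccontr)
    assume "p i r \<noteq> 0"
    then have "0 < p i r" using nn[of i r] by simp
    then have "rep i = rep r" by (rule same_rep)
    then show False using that r0_def unfolding RR_def by simp
  qed
  have "(\<Sum>r\<in>RR. p i r * p j r / p r r) = p i r0 * p j r0 / p r0 r0 + (\<Sum>r\<in>RR-{r0}. p i r * p j r / p r r)"
    by (rule sum.remove[OF RR_fin r0])
  also have "(\<Sum>r\<in>RR-{r0}. p i r * p j r / p r r) = 0"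
    using others by (intro sum.neutral) auto
  also have "p i r0 * p j r0 / p r0 r0 = p i j"
  proof -
    have r0i: "0 < p r0 i" using pir0 sym by simp
    have "p i j * p r0 r0 = p r0 j * p i r0" using key[OF r0i] .
    then show ?thesis using r0r0 sym[of r0 j] by (simp add: field_simps)
  qed
  finally show ?thesis by simp
next
  case False
  then show ?thesis using not_pos_zero[OF False] by simp
qed

lemma col_struct: "(\<forall>i. p i j = 0) \<or> (\<exists>r\<in>RR. \<exists>c. \<forall>i. p i j = c * p i r)"
proof (cases "0 < p j j")
  case True
  define r where "r = rep j"
  have rR: "r \<in> RR" using rep_in_RR True r_def by simp
  have pjr: "0 < p j r" using rep_pos True r_def by simp
  have rr: "0 < p r r" using rR unfolding RR_def by simp
  have rj: "0 < p r j" using pjr sym by simp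
  have "\<forall>i. p i j = (p j r / p r r) * p i r"
  proof
    fix i
    have "p j i * p r r = p r i * p j r" using key[OF rj] .
    then show "p i j = (p j r / p r r) * p i r" using rr sym[of i j] sym[of r i] by (simp add: field_simps)
  qed
  then show ?thesis using rR by blast
next
  case False
  then show ?thesis using not_pos_zero[OF False] sym by metis
qed

end

lemma (in vec_space) rank_struct:
  assumes A: "A \<in> carrier_mat n n" and R: "R \<subseteq> {..<n}"
    and diag: "\<And>r. r \<in> R \<Longrightarrow> A $$ (r,r) \<noteq> 0"
    and off: "\<And>r s. r \<in> R \<Longrightarrow> s \<in> R \<Longrightarrow> r \<noteq> s \<Longrightarrow> A $$ (s,r) = 0"
    and cls: "\<And>j. j < n \<Longrightarrow> col A j = 0\<^sub>v n \<or> (\<exists>r\<in>R. \<exists>c. col A j = c \<cdot>\<^sub>v col A r)"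
  shows "rank A = card R"
proof -
  define S0 where "S0 = col A ` R"
  have finR: "finite R" using R finite_subset by blast
  have dr: "dim_row A = n" and dc: "dim_col A = n" using A by auto
  have colr: "col A r $ i = A $$ (i,r)" if "i < n" "r < n" for i r using that dr dc by simp
  have inj: "inj_on (col A) R"
  proof (rule inj_onI)
    fix r s assume rs: "r \<in> R" "s \<in> R" "col A r = col A s"
    show "r = s"
    proof (rule ccontr)
      assume ne: "r \<noteq> s"
      have rn: "r < n" and sn: "s < n" using R rs by auto
      have "col A s $ r = A $$ (r,s)" using colr[OF rn sn] .
      also have "\<dots> = 0" using off[OF rs(2) rs(1)] ne by simp
      finally have "col A s $ r = 0" .
      moreover have "col A r $ r \<noteq> 0" using diag[OF rs(1)] colr[OF rn rn] by simp
      ultimately show False using rs(3) by simp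
    qed
  qed
  have card: "card S0 = card R" unfolding S0_def using card_image[OF inj] .
  have colin: "col A r \<in> set (cols A)" if "r < n" for r
    using that dc by (metis cols_length cols_nth nth_mem)
  have S0sub: "S0 \<subseteq> set (cols A)" unfolding S0_def using colin R by auto
  have S0car: "S0 \<subseteq> carrier_vec n" unfolding S0_def using dr by auto
  have finS0: "finite S0" unfolding S0_def using finR by simp
  have li: "lin_indpt S0"
  proof (rule finite_lin_indpt2[OF finS0])
    show "S0 \<subseteq> carrier_vec n" by (rule S0car)
  next
    fix a assume "True" and lc: "lincomb a S0 = 0\<^sub>v n"
    show "\<forall>v\<in>S0. a v = 0"
    proof
      fix v assume "v \<in> S0"
      then obtain r where r: "r \<in> R" "v = col A r" unfolding S0_def by auto
      have rn: "r < n" using r R by auto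
      have "lincomb a S0 $ r = (\<Sum>x\<in>S0. a x * x $ r)" by (rule lincomb_index[OF rn S0car])
      also have "\<dots> = a v * v $ r + (\<Sum>x\<in>S0-{v}. a x * x $ r)"
        by (rule sum.remove[OF finS0 \<open>v \<in> S0\<close>])
      also have "(\<Sum>x\<in>S0-{v}. a x * x $ r) = 0"
      proof (intro sum.neutral ballI)
        fix x assume "x \<in> S0 - {v}"
        then obtain s where s: "s \<in> R" "x = col A s" "s \<noteq> r" unfolding S0_def using r by auto
        have "x $ r = A $$ (r,s)" using s colr rn R by auto
        also have "\<dots> = 0" using off[OF s(1) r(1) s(3)] .
        finally show "a x * x $ r = 0" by simp
      qed
      finally have "lincomb a S0 $ r = a v * v $ r" by simp
      moreover have "lincomb a S0 $ r = 0" using lc rn by simp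
      moreover have "v $ r \<noteq> 0" using r colr rn diag by simp
      ultimately show "a v = 0" by simp
    qed
  qed
  have max: "maximal S0 (\<lambda>T. T \<subseteq> set (cols A) \<and> lin_indpt T)"
    unfolding maximal_def
  proof (intro conjI allI impI)
    show "S0 \<subseteq> set (cols A)" by (rule S0sub)
    show "lin_indpt S0" by (rule li)
    fix B assume B: "S0 \<subseteq> B \<and> B \<subseteq> set (cols A) \<and> lin_indpt B"
    show "B = S0"
    proof (rule ccontr)
      assume "B \<noteq> S0"
      then obtain v where v: "v \<in> B" "v \<notin> S0" using B by auto
      then obtain j where j: "j < n" "v = col A j" using B dc
        by (metis cols_length cols_nth in_set_conv_nth subsetD)
      from cls[OF j(1)] show False
      proof
        assume "col A j = 0\<^sub>v n"
        then have "0\<^sub>v n \<in> B" using v j by simp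
        moreover have "(UNIV :: 'a set) \<noteq> {0}"
          by (metis UNIV_I one_neq_zero singletonD)
        ultimately have "lin_dep B" by (rule zero_lin_dep)
        then show False using B by simp
      next
        assume "\<exists>r\<in>R. \<exists>c. col A j = c \<cdot>\<^sub>v col A r"
        then obtain r c where r: "r \<in> R" "col A j = c \<cdot>\<^sub>v col A r" by blast
        have rS: "col A r \<in> S0" unfolding S0_def using r by simp
        have ne: "v \<noteq> col A r" using v rS by auto
        have rB: "col A r \<in> B" using rS B by auto
        define a where "a x = (if x = v then 1 else - c)" for x
        have vcar: "v \<in> carrier_vec n" and rcar: "col A r \<in> carrier_vec n" using j dr by auto
        have "lincomb a {v, col A r} = 0\<^sub>v n"
        proof (rule eq_vecI)
          show "dim_vec (lincomb a {v, col A r}) = dim_vec (0\<^sub>v n)"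
            using lincomb_dim[of "{v, col A r}" a] vcar rcar by simp
          fix i assume "i < dim_vec (0\<^sub>v n)"
          then have i: "i < n" by simp
          have "lincomb a {v, col A r} $ i = (\<Sum>x\<in>{v, col A r}. a x * x $ i)"
            using lincomb_index[OF i, of "{v, col A r}" a] vcar rcar by simp
          also have "\<dots> = v $ i - c * col A r $ i" using ne unfolding a_def by simp
          also have "\<dots> = 0" using j r(2) i carrier_vecD[OF rcar] by simp
          finally show "lincomb a {v, col A r} $ i = 0\<^sub>v n $ i" using i by simp
        qed
        then have "lin_dep B"
          by (intro lin_dep_crit[where A="{v, col A r}" and S=B and a=a and v=v]) (use v rB a_def in auto)
        then show False using B by simp
      qed
    qed
  qed
  show ?thesis using rank_card_indpt[OF A max] card by simp
qed


lemma sum_nth_distinct: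
  assumes "distinct xs" shows "(\<Sum>a<length xs. f (xs ! a)) = sum f (set xs)"
proof -
  have "sum f (set xs) = sum_list (map f xs)" by (rule sum_list_distinct_conv_sum_set[OF assms, symmetric])
  also have "\<dots> = (\<Sum>a = 0..<length xs. map f xs ! a)" by (simp add: sum_list_sum_nth)
  also have "\<dots> = (\<Sum>a<length xs. f (xs ! a))" by (simp add: atLeast0LessThan)
  finally show ?thesis by simp
qed

theorem lemma4p2:
  fixes n q :: nat and P :: "complex mat"
  assumes "nonneg_projector n P"
    and "vec_space.rank (2^n) P = q"
  shows "\<exists>\<psi> :: nat \<Rightarrow> complex vec.
           (\<forall>a<q. nonneg_state n (\<psi> a))
         \<and> (\<forall>a<q. \<forall>b<q. braket (\<psi> a) (\<psi> b) = (if a = b then 1 else 0))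
         \<and> P = sum_ketbra n q \<psi>"
proof -
  define N :: nat where "N = 2^n"
  have Pc: "P \<in> carrier_mat N N" and adj: "mat_adjoint P = P" and PP: "P * P = P"
    and ent: "\<And>i j. i < N \<Longrightarrow> j < N \<Longrightarrow> nonneg_entry (P $$ (i,j))"
    using assms(1) unfolding nonneg_projector_def N_def by auto
  have dr: "dim_row P = N" and dc: "dim_col P = N" using Pc by auto
  define p where "p i j = (if i < N \<and> j < N then Re (P $$ (i,j)) else 0)" for i j
  have Pent: "P $$ (i,j) = complex_of_real (p i j)" if "i < N" "j < N" for i j
    using ent[OF that] that unfolding nonneg_entry_def p_def by simp
  have pnn: "0 \<le> p i j" for i j
    using ent unfolding nonneg_entry_def p_def by auto
  have psym: "p i j = p j i" for i j
  proof (cases "i < N \<and> j < N")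
    case True
    have "P $$ (i,j) = mat_adjoint P $$ (i,j)" using adj by simp
    also have "\<dots> = cnj (P $$ (j,i))"
      unfolding mat_adjoint_def using True dr dc by (simp add: mat_of_rows_index)
    finally have "complex_of_real (p i j) = cnj (complex_of_real (p j i))"
      using Pent True by simp
    then show ?thesis by simp
  next
    case False
    then show ?thesis unfolding p_def by auto
  qed
  have pidem: "p i j = (\<Sum>k<N. p i k * p k j)" for i j
  proof (cases "i < N \<and> j < N")
    case True
    have "P $$ (i,j) = (P * P) $$ (i,j)" using PP by simp
    also have "\<dots> = (\<Sum>k\<in>{0..<N}. P $$ (i,k) * P $$ (k,j))"
      using True dr dc by (simp add: scalar_prod_def)
    also have "\<dots> = (\<Sum>k<N. complex_of_real (p i k * p k j))"
      using True Pent by (simp add: atLeast0LessThan)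
    finally have "complex_of_real (p i j) = complex_of_real (\<Sum>k<N. p i k * p k j)"
      using Pent True by simp
    then show ?thesis by (simp only: of_real_eq_iff)
  next
    case False
    then show ?thesis unfolding p_def by auto
  qed
  have pout: "N \<le> i \<Longrightarrow> p i j = 0" for i j unfolding p_def by simp
  interpret nnproj p N
    by unfold_locales (fact pnn, fact psym, fact pidem, erule pout)
  have rank: "vec_space.rank N P = card RR"
  proof (rule vec_space.rank_struct[OF Pc RR_sub])
    fix r assume "r \<in> RR"
    then have "0 < p r r" "r < N" unfolding RR_def using pos_lt by auto
    then show "P $$ (r,r) \<noteq> 0" using Pent by simp
  next
    fix r s assume "r \<in> RR" "s \<in> RR" "r \<noteq> s"
    then have "p s r = 0" "r < N" "s < N" using RR_orth RR_sub by auto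
    then show "P $$ (s,r) = 0" using Pent by simp
  next
    fix j assume j: "j < N"
    from col_struct[of j]
    show "col P j = 0\<^sub>v N \<or> (\<exists>r\<in>RR. \<exists>c. col P j = c \<cdot>\<^sub>v col P r)"
    proof
      assume z: "\<forall>i. p i j = 0"
      have "col P j = 0\<^sub>v N"
        by (rule eq_vecI) (use z j dr dc Pent in auto)
      then show ?thesis by simp
    next
      assume "\<exists>r\<in>RR. \<exists>c. \<forall>i. p i j = c * p i r"
      then obtain r c where r: "r \<in> RR" "\<forall>i. p i j = c * p i r" by blast
      have rN: "r < N" using r RR_sub by auto
      have "col P j = complex_of_real c \<cdot>\<^sub>v col P r"
        by (rule eq_vecI) (use r rN j dr dc Pent in auto)
      then show ?thesis using r by blast
    qed
  qed
  have qR: "q = card RR" using assms(2) rank N_def by simp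
  define rs where "rs = sorted_list_of_set RR"
  have rs: "distinct rs" "set rs = RR" "length rs = q"
    unfolding rs_def qR using RR_fin by auto
  define phi where "phi r = vec N (\<lambda>i. complex_of_real (p i r / sqrt (p r r)))" for r
  define psi where "psi a = phi (rs ! a)" for a
  have rsR: "rs ! a \<in> RR" if "a < q" for a using rs that nth_mem by metis
  have RRpos: "0 < p r r" if "r \<in> RR" for r using that unfolding RR_def by simp
  have br: "braket (phi r) (phi s) = complex_of_real (p r s / (sqrt (p r r) * sqrt (p s s)))"
    if "r \<in> RR" "s \<in> RR" for r s
  proof -
    have "braket (phi r) (phi s) = (\<Sum>i<N. complex_of_real (p i r / sqrt (p r r) * (p i s / sqrt (p s s))))"
      unfolding braket_def phi_def by simp
    also have "\<dots> = complex_of_real (\<Sum>i<N. p r i * p i s / (sqrt (p r r) * sqrt (p s s)))"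
    proof -
      have "(\<Sum>i<N. complex_of_real (p i r / sqrt (p r r) * (p i s / sqrt (p s s))))
          = (\<Sum>i<N. complex_of_real (p r i * p i s / (sqrt (p r r) * sqrt (p s s))))"
      proof (rule sum.cong[OF refl])
        fix i show "complex_of_real (p i r / sqrt (p r r) * (p i s / sqrt (p s s)))
          = complex_of_real (p r i * p i s / (sqrt (p r r) * sqrt (p s s)))"
          using psym[of i r] by simp
      qed
      then show ?thesis by simp
    qed
    also have "(\<Sum>i<N. p r i * p i s / (sqrt (p r r) * sqrt (p s s))) = p r s / (sqrt (p r r) * sqrt (p s s))"
      by (simp add: sum_divide_distrib[symmetric] pidem[symmetric])
    finally show ?thesis .
  qed
  show ?thesis
  proof (intro exI[of _ psi] conjI allI impI)
    fix a assume a: "a < q"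
    have r: "rs ! a \<in> RR" using rsR a .
    show "nonneg_state n (psi a)"
      unfolding nonneg_state_def
    proof (intro conjI allI impI)
      show "psi a \<in> carrier_vec (2^n)" unfolding psi_def phi_def N_def by simp
      have "braket (psi a) (psi a) = complex_of_real (p (rs!a) (rs!a) / (sqrt (p (rs!a) (rs!a)) * sqrt (p (rs!a) (rs!a))))"
        unfolding psi_def by (rule br[OF r r])
      also have "\<dots> = 1" using RRpos[OF r] by simp
      finally show "braket (psi a) (psi a) = 1" .
      fix i :: nat assume "i < 2^n"
      then show "nonneg_entry (psi a $ i)"
        unfolding psi_def phi_def nonneg_entry_def N_def using pnn by simp
    qed
  next
    fix a b assume a: "a < q" and b: "b < q"
    have ra: "rs ! a \<in> RR" and rb: "rs ! b \<in> RR" using rsR a b by auto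
    show "braket (psi a) (psi b) = (if a = b then 1 else 0)"
    proof (cases "a = b")
      case True
      then show ?thesis unfolding psi_def using br[OF ra ra] RRpos[OF ra] by simp
    next
      case False
      then have "rs ! a \<noteq> rs ! b" using rs a b nth_eq_iff_index_eq by metis
      then have "p (rs ! a) (rs ! b) = 0" using RR_orth ra rb by simp
      then show ?thesis unfolding psi_def using br[OF ra rb] False by simp
    qed
  next
    show "P = sum_ketbra n q psi"
    proof (rule eq_matI)
      show "dim_row P = dim_row (sum_ketbra n q psi)" "dim_col P = dim_col (sum_ketbra n q psi)"
        unfolding sum_ketbra_def using dr dc N_def by auto
      fix i j assume "i < dim_row (sum_ketbra n q psi)" "j < dim_col (sum_ketbra n q psi)"
      then have i: "i < N" and j: "j < N" unfolding sum_ketbra_def N_def by auto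
      have "sum_ketbra n q psi $$ (i,j) = (\<Sum>a<q. ketbra (psi a) $$ (i,j))"
        unfolding sum_ketbra_def using i j N_def by simp
      also have "\<dots> = (\<Sum>a<q. complex_of_real (p i (rs!a) * p j (rs!a) / p (rs!a) (rs!a)))"
      proof (rule sum.cong[OF refl])
        fix a assume "a \<in> {..<q}"
        then have r: "rs ! a \<in> RR" using rsR by simp
        have "sqrt (p (rs!a) (rs!a)) * sqrt (p (rs!a) (rs!a)) = p (rs!a) (rs!a)"
          using RRpos[OF r] by simp
        then have s2: "complex_of_real (sqrt (p (rs!a) (rs!a))) * complex_of_real (sqrt (p (rs!a) (rs!a)))
            = complex_of_real (p (rs!a) (rs!a))" by (metis of_real_mult)
        then show "ketbra (psi a) $$ (i,j) = complex_of_real (p i (rs!a) * p j (rs!a) / p (rs!a) (rs!a))"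
          unfolding ketbra_def psi_def phi_def using i j s2 by (simp add: field_simps)
      qed
      also have "\<dots> = complex_of_real (\<Sum>a<q. p i (rs!a) * p j (rs!a) / p (rs!a) (rs!a))"
        by simp
      also have "(\<Sum>a<q. p i (rs!a) * p j (rs!a) / p (rs!a) (rs!a)) = (\<Sum>r\<in>RR. p i r * p j r / p r r)"
        using sum_nth_distinct[OF rs(1), of "\<lambda>r. p i r * p j r / p r r"] unfolding rs(2,3) .
      also have "\<dots> = p i j" by (rule decomp[symmetric])
      finally show "P $$ (i,j) = sum_ketbra n q psi $$ (i,j)" using Pent i j by simp
    qed
  qed
qed

end
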